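(* Fix an instance of Problem (P) and the blockers $b(i)$ ($1\le i\le n$) determined by running Algorithm 1 on it. Consider the modified algorithm obtained from Algorithm 1 by initializing $y_i=\mathrm{avg}(i,b(i))$ for each $i$ (before the while loop) and deleting the step "$y_i\leftarrow\mathrm{avg}(i,i^* )$ for all $i_L<i<i^*$" (so the $y_i$ are never updated). Then the modified algorithm produces the same output $x_1,\dots,x_n$ as Algorithm 1 on this instance.
   Context: Problem (P): given an integer $n\ge1$, reals $0<q_1\le\cdots\le q_n$, $z_1,\dots,z_n>0$ and $K>0$, maximize $\sum_{i=1}^n x_i$ subject to $0\le x_i\le q_i$ for all $i$, $0\le x_1\le\cdots\le x_n$, and $\sum_{i=1}^n z_ix_i\le K$. For $1\le i<j\le n+1$ let $\mathrm{sum}(i,j)=z_i+\cdots+z_{j-1}$ and $\mathrm{avg}(i,j)=\mathrm{sum}(i,j)/(j-i)$. Algorithm 1: Initialize $S=\{0,n+1\}$, $y_i=\mathrm{avg}(i,n+1)$ and $x_i=0$ for $i=1,\dots,n$, and $\hat B=K$. While $\hat B>0$ and $S\ne\{0,1,\dots,n+1\}$, perform an iteration: let $i^*$ be the index $i\in\{1,\dots,n\}\setminus S$ minimizing $y_i$, ties broken in favour of the smallest index; let $i_L=\max\{j\in S:j<i^*\}$ and $i_R=\min\{j\in S:j>i^*\}$; set $d=\min\{\hat B/((i_R-i^* )y_{i^*}),\ q_{i^*}-x_{i^*}\}$; set $\hat B\leftarrow\hat B-d(i_R-i^* )y_{i^*}$; set $x_i\leftarrow x_i+d$ for all $i^*\le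 i<i_R$; set $y_i\leftarrow\mathrm{avg}(i,i^* )$ for all $i_L<i<i^*$; add $i^*$ to $S$. When the loop ends, output $x_1,\dots,x_n$. Blocker: for $1\le i\le n$, $b(i)$ is the value of $i^*$ in the last iteration of Algorithm 1 in which $y_i$ is updated (i.e. the last iteration with $i_L<i<i^*$); if $y_i$ is never updated, $b(i)=n+1$. *)

theory Defs
  imports Main "HOL.Real"
begin

text \<open>Indices 1..n; q, z are functions nat => real, only values at 1..n matter.
  sum(i,j) = z_i + ... + z_(j-1),  avg(i,j) = sum(i,j)/(j-i).\<close>

definition sumz :: "(nat \<Rightarrow> real) \<Rightarrow> nat \<Rightarrow> nat \<Rightarrow> real" where
  "sumz z i j = (\<Sum>k\<in>{i..<j}. z k)"

definition avg :: "(nat \<Rightarrow> real) \<Rightarrow> nat \<Rightarrow> nat \<Rightarrow> real" where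
  "avg z i j = sumz z i j / real (j - i)"

text \<open>State of Algorithm 1. The field blk records, for each i, the value of i*
  in the last iteration in which i_L < i < i* (initially n+1), i.e. the blocker.\<close>

record alg_state =
  Sset :: "nat set"
  yv :: "nat \<Rightarrow> real"
  xv :: "nat \<Rightarrow> real"
  Bh :: real
  blk :: "nat \<Rightarrow> nat"

text \<open>One iteration of the loop body. If upd is True, the step
  y_i := avg(i,i*) for i_L < i < i* is performed (Algorithm 1); if False it is
  deleted (modified algorithm).\<close>

definition iteration :: "bool \<Rightarrow> nat \<Rightarrow> (nat \<Rightarrow> real) \<Rightarrow> (nat \<Rightarrow> real) \<Rightarrow> alg_state \<Rightarrow> alg_state" where
  "iteration upd n q z st =
    (let U = {1..n} - Sset st;
         istar = (LEAST i. i \<in> U \<and> (\<forall>j\<in>U. yv st i \<le> yv st j));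
         iL = Max {j \<in> Sset st. j < istar};
         iR = Min {j \<in> Sset st. istar < j};
         d = min (Bh st / (real (iR - istar) * yv st istar)) (q istar - xv st istar)
     in st\<lparr> Sset := insert istar (Sset st),
            yv := (if upd then (\<lambda>i. if iL < i \<and> i < istar then avg z i istar else yv st i)
                   else yv st),
            xv := (\<lambda>i. if istar \<le> i \<and> i < iR then xv st i + d else xv st i),
            Bh := Bh st - d * real (iR - istar) * yv st istar,
            blk := (\<lambda>i. if iL < i \<and> i < istar then istar else blk st i) \<rparr>)"

definition loop_step :: "bool \<Rightarrow> nat \<Rightarrow> (nat \<Rightarrow> real) \<Rightarrow> (nat \<Rightarrow> real) \<Rightarrow> alg_state \<Rightarrow> alg_state" where
  "loop_step upd n q z st =
    (if 0 < Bh st \<and> Sset st \<noteq> {0..n+1} then iteration upd n q z st else st)"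

text \<open>Each iteration adds a new element of {1..n} to S, so the loop performs at most
  n iterations; iterating the guarded step n times therefore reaches the final state.\<close>

definition run :: "bool \<Rightarrow> nat \<Rightarrow> (nat \<Rightarrow> real) \<Rightarrow> (nat \<Rightarrow> real) \<Rightarrow> alg_state \<Rightarrow> alg_state" where
  "run upd n q z st0 = (loop_step upd n q z ^^ n) st0"

definition init1 :: "nat \<Rightarrow> (nat \<Rightarrow> real) \<Rightarrow> real \<Rightarrow> alg_state" where
  "init1 n z K = \<lparr> Sset = {0, n+1}, yv = (\<lambda>i. avg z i (n+1)), xv = (\<lambda>_. 0), Bh = K,
                   blk = (\<lambda>_. n+1) \<rparr>"

definition alg1 :: "nat \<Rightarrow> (nat \<Rightarrow> real) \<Rightarrow> (nat \<Rightarrow> real) \<Rightarrow> real \<Rightarrow> alg_state" where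
  "alg1 n q z K = run True n q z (init1 n z K)"

definition blocker :: "nat \<Rightarrow> (nat \<Rightarrow> real) \<Rightarrow> (nat \<Rightarrow> real) \<Rightarrow> real \<Rightarrow> nat \<Rightarrow> nat" where
  "blocker n q z K = blk (alg1 n q z K)"

definition alg_mod :: "nat \<Rightarrow> (nat \<Rightarrow> real) \<Rightarrow> (nat \<Rightarrow> real) \<Rightarrow> real \<Rightarrow> alg_state" where
  "alg_mod n q z K = run False n q z
     ((init1 n z K)\<lparr> yv := (\<lambda>i. avg z i (blocker n q z K i)) \<rparr>)"

end

theory Submission
  imports Defs
begin

lemma avg_split:
  assumes "i < p" "p < r" "avg z p r \<le> avg z i r"
  shows "avg z i r \<le> avg z i p"
proof -
  have s: "sumz z i r = sumz z i p + sumz z p r" unfolding sumz_def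
    using assms by (simp add: sum.atLeastLessThan_concat)
  define a where "a = real (p - i)"
  define b where "b = real (r - p)"
  have ab: "real (r - i) = a + b" using assms unfolding a_def b_def by simp
  have a0: "a > 0" "b > 0" using assms unfolding a_def b_def by auto
  define S1 where "S1 = sumz z i p"
  define S2 where "S2 = sumz z p r"
  have h: "S2 / b \<le> (S1 + S2) / (a + b)" using assms(3) unfolding avg_def s ab
    by (simp add: S1_def S2_def b_def)
  have h2: "S2 * (a + b) \<le> (S1 + S2) * b" using h a0
    by (simp add: divide_simps)
  have "(S1 + S2) * a \<le> S1 * (a + b)" using h2 by (simp add: algebra_simps)
  hence "(S1 + S2) / (a + b) \<le> S1 / a" using a0 by (simp add: divide_simps)
  thus ?thesis unfolding avg_def s ab by (simp add: S1_def S2_def a_def)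
qed

definition istar_of :: "nat \<Rightarrow> alg_state \<Rightarrow> nat" where
  "istar_of n st = (let U = {1..n} - Sset st in LEAST i. i \<in> U \<and> (\<forall>j\<in>U. yv st i \<le> yv st j))"

lemma iteration_alt: "iteration upd n q z st =
    (let istar = istar_of n st;
         iL = Max {j \<in> Sset st. j < istar};
         iR = Min {j \<in> Sset st. istar < j};
         d = min (Bh st / (real (iR - istar) * yv st istar)) (q istar - xv st istar)
     in st\<lparr> Sset := insert istar (Sset st),
            yv := (if upd then (\<lambda>i. if iL < i \<and> i < istar then avg z i istar else yv st i)
                   else yv st),
            xv := (\<lambda>i. if istar \<le> i \<and> i < iR then xv st i + d else xv st i),
            Bh := Bh st - d * real (iR - istar) * yv st istar,
            blk := (\<lambda>i. if iL < i \<and> i < istar then istar else blk st i) \<rparr>)"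
  unfolding iteration_def istar_of_def Let_def ..

lemma iteration_cong:
  assumes "Sset ms = Sset st" "xv ms = xv st" "Bh ms = Bh st" "istar_of n ms = istar_of n st"
    "yv ms (istar_of n st) = yv st (istar_of n st)"
  shows "Sset (iteration u1 n q z ms) = Sset (iteration u2 n q z st) \<and>
         xv (iteration u1 n q z ms) = xv (iteration u2 n q z st) \<and>
         Bh (iteration u1 n q z ms) = Bh (iteration u2 n q z st)"
  unfolding iteration_alt Let_def assms(1,2,3,4,5) by simp

lemma least_argmin:
  fixes f :: "nat \<Rightarrow> real"
  assumes "finite U" "U \<noteq> {}"
  shows "(LEAST i. i \<in> U \<and> (\<forall>j\<in>U. f i \<le> f j)) \<in> U \<and>
         (\<forall>j\<in>U. f (LEAST i. i \<in> U \<and> (\<forall>j\<in>U. f i \<le> f j)) \<le> f j)"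
proof -
  have "Min (f ` U) \<in> f ` U" using assms by simp
  then obtain m where m: "m \<in> U" "f m = Min (f ` U)" by auto
  have "\<forall>j\<in>U. f m \<le> f j" using m assms by simp
  hence "m \<in> U \<and> (\<forall>j\<in>U. f m \<le> f j)" using m by simp
  thus ?thesis by (rule LeastI)
qed

definition inv :: "nat \<Rightarrow> (nat \<Rightarrow> real) \<Rightarrow> alg_state \<Rightarrow> bool" where
  "inv n z st \<longleftrightarrow> 0 \<in> Sset st \<and> n+1 \<in> Sset st \<and> Sset st \<subseteq> {0..n+1} \<and>
     (\<forall>i. yv st i = avg z i (blk st i)) \<and>
     (\<forall>i\<in>{1..n} - Sset st. blk st i \<in> Sset st \<and> i < blk st i \<and>
         (\<forall>j\<in>Sset st. i < j \<longrightarrow> blk st i \<le> j))"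

lemma step_true:
  assumes I: "inv n z st" and g: "Sset st \<noteq> {0..n+1}"
  shows "inv n z (iteration True n q z st)"
    and "Sset (iteration True n q z st) = insert (istar_of n st) (Sset st)"
    and "istar_of n st \<in> {1..n} - Sset st"
    and "\<forall>j \<in> {1..n} - Sset st. yv st (istar_of n st) \<le> yv st j"
    and "\<forall>i. i < istar_of n st \<longrightarrow> i \<in> {1..n} - Sset st \<longrightarrow> yv st (istar_of n st) < yv st i"
    and "\<forall>i. yv st i \<le> yv (iteration True n q z st) i"
    and "\<forall>i. i \<in> insert (istar_of n st) (Sset st) \<longrightarrow> yv (iteration True n q z st) i = yv st i"
proof -
  define S where "S = Sset st"
  define U where "U = {1..n} - S"
  have S0: "0 \<in> S" "n+1 \<in> S" "S \<subseteq> {0..n+1}" using I unfolding inv_def S_def by auto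
  have yb: "\<And>i. yv st i = avg z i (blk st i)" using I unfolding inv_def by auto
  have bc: "\<And>i. i \<in> U \<Longrightarrow> blk st i \<in> S \<and> i < blk st i \<and> (\<forall>j\<in>S. i < j \<longrightarrow> blk st i \<le> j)"
    using I unfolding inv_def U_def S_def by auto
  have finS: "finite S" using S0 finite_subset by blast
  have finU: "finite U" unfolding U_def by simp
  have Une: "U \<noteq> {}"
  proof
    assume "U = {}"
    have "{0..n+1} \<subseteq> S"
    proof
      fix x assume "x \<in> {0..n+1}"
      thus "x \<in> S" using S0 \<open>U = {}\<close> unfolding U_def
        by (cases "x = 0"; cases "x = n+1") auto
    qed
    thus False using g S0 unfolding S_def by auto
  qed
  define p where "p = istar_of n st"
  have pL: "p = (LEAST i. i \<in> U \<and> (\<forall>j\<in>U. yv st i \<le> yv st j))"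
    unfolding p_def istar_of_def U_def S_def by simp
  have pU: "p \<in> U" and pmin: "\<forall>j\<in>U. yv st p \<le> yv st j"
    using least_argmin[OF finU Une, of "yv st"] pL by auto
  have pstrict: "\<forall>i. i < p \<longrightarrow> i \<in> U \<longrightarrow> yv st p < yv st i"
  proof (intro allI impI)
    fix i assume "i < p" "i \<in> U"
    hence "\<not> (i \<in> U \<and> (\<forall>j\<in>U. yv st i \<le> yv st j))" using pL not_less_Least by blast
    then obtain j where "j \<in> U" "yv st j < yv st i" using \<open>i \<in> U\<close> by force
    thus "yv st p < yv st i" using pmin by force
  qed
  have p1: "1 \<le> p" "p \<le> n" "p \<notin> S" using pU unfolding U_def by auto
  define iL where "iL = Max {j \<in> S. j < p}"
  define iR where "iR = Min {j \<in> S. p < j}"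
  have iLs: "iL \<in> S" "iL < p" "\<forall>j\<in>S. j < p \<longrightarrow> j \<le> iL"
  proof -
    have ne: "{j \<in> S. j < p} \<noteq> {}" using S0 p1 by auto
    have f: "finite {j \<in> S. j < p}" using finS by simp
    show "iL \<in> S" "iL < p" using Max_in[OF f ne] unfolding iL_def by auto
    show "\<forall>j\<in>S. j < p \<longrightarrow> j \<le> iL" using Max_ge[OF f] unfolding iL_def by auto
  qed
  have iRs: "iR \<in> S" "p < iR" "\<forall>j\<in>S. p < j \<longrightarrow> iR \<le> j"
  proof -
    have ne: "{j \<in> S. p < j} \<noteq> {}" using S0 p1 by auto
    have f: "finite {j \<in> S. p < j}" using finS by simp
    show "iR \<in> S" "p < iR" using Min_in[OF f ne] unfolding iR_def by auto
    show "\<forall>j\<in>S. p < j \<longrightarrow> iR \<le> j" using Min_le[OF f] unfolding iR_def by auto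
  qed
  have it: "iteration True n q z st = st\<lparr> Sset := insert p S,
            yv := (\<lambda>i. if iL < i \<and> i < p then avg z i p else yv st i),
            xv := (\<lambda>i. if p \<le> i \<and> i < iR then xv st i + min (Bh st / (real (iR - p) * yv st p)) (q p - xv st p) else xv st i),
            Bh := Bh st - min (Bh st / (real (iR - p) * yv st p)) (q p - xv st p) * real (iR - p) * yv st p,
            blk := (\<lambda>i. if iL < i \<and> i < p then p else blk st i) \<rparr>"
    unfolding iteration_alt Let_def iL_def iR_def p_def S_def if_True ..
  have blkp: "blk st p = iR"
  proof -
    have "blk st p \<in> S" "p < blk st p" "\<forall>j\<in>S. p < j \<longrightarrow> blk st p \<le> j" using bc[OF pU] by auto
    hence "blk st p \<le> iR" "iR \<le> blk st p" using iRs by auto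
    thus ?thesis by simp
  qed
  have mid: "\<And>i. iL < i \<Longrightarrow> i < p \<Longrightarrow> i \<in> U \<and> blk st i = iR"
  proof -
    fix i assume a: "iL < i" "i < p"
    have iU: "i \<in> U" unfolding U_def using a iLs p1 by auto
    have b1: "blk st i \<le> iR" using bc[OF iU] iRs a by auto
    have bi: "blk st i \<in> S" "i < blk st i" using bc[OF iU] by auto
    have "blk st i \<ge> p"
    proof (rule ccontr)
      assume "\<not> p \<le> blk st i"
      hence "blk st i \<le> iL" using iLs bi by auto
      thus False using a bi by simp
    qed
    hence "blk st i > p" using bi p1 by (cases "blk st i = p") auto
    hence "iR \<le> blk st i" using bc[OF iU] iRs by auto
    thus "i \<in> U \<and> blk st i = iR" using b1 iU by auto
  qed
  have mono: "\<And>i. iL < i \<Longrightarrow> i < p \<Longrightarrow> yv st i \<le> avg z i p"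
  proof -
    fix i assume a: "iL < i" "i < p"
    have "yv st p \<le> yv st i" using pmin mid[OF a] by auto
    hence "avg z p iR \<le> avg z i iR" using yb[of p] yb[of i] blkp mid[OF a] by simp
    hence "avg z i iR \<le> avg z i p" using avg_split[OF a(2) iRs(2)] by simp
    thus "yv st i \<le> avg z i p" using yb[of i] mid[OF a] by simp
  qed
  show "Sset (iteration True n q z st) = insert (istar_of n st) (Sset st)"
    using it by (simp add: p_def S_def)
  show "istar_of n st \<in> {1..n} - Sset st" using pU unfolding p_def U_def S_def .
  show "\<forall>j \<in> {1..n} - Sset st. yv st (istar_of n st) \<le> yv st j"
    using pmin unfolding p_def U_def S_def .
  show "\<forall>i. i < istar_of n st \<longrightarrow> i \<in> {1..n} - Sset st \<longrightarrow> yv st (istar_of n st) < yv st i"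
    using pstrict unfolding p_def U_def S_def .
  show "\<forall>i. yv st i \<le> yv (iteration True n q z st) i"
    using it mono by simp
  show "\<forall>i. i \<in> insert (istar_of n st) (Sset st) \<longrightarrow> yv (iteration True n q z st) i = yv st i"
    using it iLs unfolding p_def[symmetric] S_def[symmetric] by auto
  define st' where "st' = iteration True n q z st"
  have S': "Sset st' = insert p S" using it unfolding st'_def by simp
  have y': "\<And>i. yv st' i = (if iL < i \<and> i < p then avg z i p else yv st i)" using it unfolding st'_def by simp
  have b': "\<And>i. blk st' i = (if iL < i \<and> i < p then p else blk st i)" using it unfolding st'_def by simp
  have c1: "0 \<in> Sset st'" "n+1 \<in> Sset st'" "Sset st' \<subseteq> {0..n+1}" using S0 p1 S' by auto
  have c2: "\<forall>i. yv st' i = avg z i (blk st' i)" using yb y' b' by auto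
  have c3: "\<forall>i\<in>{1..n} - Sset st'. blk st' i \<in> Sset st' \<and> i < blk st' i \<and>
         (\<forall>j\<in>Sset st'. i < j \<longrightarrow> blk st' i \<le> j)"
  proof
    fix i assume iA: "i \<in> {1..n} - Sset st'"
    hence iU: "i \<in> U" unfolding U_def S' by auto
    show "blk st' i \<in> Sset st' \<and> i < blk st' i \<and> (\<forall>j\<in>Sset st'. i < j \<longrightarrow> blk st' i \<le> j)"
    proof (cases "iL < i \<and> i < p")
      case a: True
      have "\<forall>j\<in>S. i < j \<longrightarrow> p \<le> j"
      proof (intro ballI impI)
        fix j assume "j \<in> S" "i < j"
        show "p \<le> j"
        proof (rule ccontr)
          assume "\<not> p \<le> j" hence "j \<le> iL" using iLs \<open>j \<in> S\<close> by auto
          thus False using a \<open>i < j\<close> by simp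
        qed
      qed
      thus ?thesis using a b' S' by auto
    next
      case a: False
      have "i < p \<Longrightarrow> blk st i \<le> p"
      proof -
        assume "i < p"
        hence "i \<le> iL" using a by auto
        moreover have "i \<noteq> iL" using iU iLs unfolding U_def by auto
        ultimately have "i < iL" by simp
        hence "blk st i \<le> iL" using bc[OF iU] iLs by auto
        thus ?thesis using iLs by simp
      qed
      thus ?thesis using a b' S' bc[OF iU] by auto
    qed
  qed
  show "inv n z (iteration True n q z st)"
    unfolding inv_def st'_def[symmetric] using c1 c2 c3 by (intro conjI)
qed


lemma loop_true_props:
  assumes I: "inv n z st"
  shows "inv n z (loop_step True n q z st)"
    and "Sset st \<subseteq> Sset (loop_step True n q z st)"
    and "\<And>i. yv st i \<le> yv (loop_step True n q z st) i"
    and "\<And>i. i \<in> Sset st \<Longrightarrow> yv (loop_step True n q z st) i = yv st i"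
  using I step_true(1,2,6,7)[OF I, of q] unfolding loop_step_def by auto

lemma A_inv:
  assumes "inv n z st0"
  shows "inv n z ((loop_step True n q z ^^ k) st0)"
  using assms by (induction k) (auto intro: loop_true_props(1))

lemma A_mono:
  assumes I: "inv n z st0" and km: "k \<le> m"
  shows "yv ((loop_step True n q z ^^ k) st0) i \<le> yv ((loop_step True n q z ^^ m) st0) i \<and>
    (i \<in> Sset ((loop_step True n q z ^^ k) st0) \<longrightarrow>
       i \<in> Sset ((loop_step True n q z ^^ m) st0) \<and>
       yv ((loop_step True n q z ^^ m) st0) i = yv ((loop_step True n q z ^^ k) st0) i)"
  using km
proof (induction m)
  case 0
  thus ?case by simp
next
  case (Suc m)
  show ?case
  proof (cases "k = Suc m")
    case True thus ?thesis by simp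
  next
    case False
    hence IH: "yv ((loop_step True n q z ^^ k) st0) i \<le> yv ((loop_step True n q z ^^ m) st0) i \<and>
    (i \<in> Sset ((loop_step True n q z ^^ k) st0) \<longrightarrow>
       i \<in> Sset ((loop_step True n q z ^^ m) st0) \<and>
       yv ((loop_step True n q z ^^ m) st0) i = yv ((loop_step True n q z ^^ k) st0) i)"
      using Suc by simp
    have Im: "inv n z ((loop_step True n q z ^^ m) st0)" using A_inv[OF I] .
    show ?thesis using IH loop_true_props[OF Im, where q=q] by (auto intro: order_trans)
  qed
qed

lemma main_sim:
  assumes I: "inv n z st0"
    and y0: "yv ms0 = yv ((loop_step True n q z ^^ N) st0)"
    and s0: "Sset ms0 = Sset st0" and x0: "xv ms0 = xv st0" and b0: "Bh ms0 = Bh st0"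
    and kN: "k \<le> N"
  shows "Sset ((loop_step False n q z ^^ k) ms0) = Sset ((loop_step True n q z ^^ k) st0) \<and>
    xv ((loop_step False n q z ^^ k) ms0) = xv ((loop_step True n q z ^^ k) st0) \<and>
    Bh ((loop_step False n q z ^^ k) ms0) = Bh ((loop_step True n q z ^^ k) st0) \<and>
    yv ((loop_step False n q z ^^ k) ms0) = yv ((loop_step True n q z ^^ N) st0)"
  using kN
proof (induction k)
  case 0
  thus ?case using s0 x0 b0 y0 by simp
next
  case (Suc k)
  define st where "st = (loop_step True n q z ^^ k) st0"
  define ms where "ms = (loop_step False n q z ^^ k) ms0"
  define yF where "yF = yv ((loop_step True n q z ^^ N) st0)"
  have H: "Sset ms = Sset st" "xv ms = xv st" "Bh ms = Bh st" "yv ms = yF"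
    using Suc unfolding st_def ms_def yF_def by auto
  have Ist: "inv n z st" unfolding st_def using A_inv[OF I] .
  have goal_eq: "?case \<longleftrightarrow> (Sset (loop_step False n q z ms) = Sset (loop_step True n q z st) \<and>
    xv (loop_step False n q z ms) = xv (loop_step True n q z st) \<and>
    Bh (loop_step False n q z ms) = Bh (loop_step True n q z st) \<and>
    yv (loop_step False n q z ms) = yF)"
    unfolding st_def ms_def yF_def by simp
  show ?case unfolding goal_eq
  proof (cases "0 < Bh st \<and> Sset st \<noteq> {0..n+1}")
    case False
    thus "Sset (loop_step False n q z ms) = Sset (loop_step True n q z st) \<and>
    xv (loop_step False n q z ms) = xv (loop_step True n q z st) \<and>
    Bh (loop_step False n q z ms) = Bh (loop_step True n q z st) \<and>
    yv (loop_step False n q z ms) = yF" using H unfolding loop_step_def by auto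
  next
    case True
    hence g: "Sset st \<noteq> {0..n+1}" by simp
    note STa = step_true(2,7)[OF Ist g, of q]
    note STb = step_true(3,4,5)[OF Ist g]
    define p where "p = istar_of n st"
    define U where "U = {1..n} - Sset st"
    have st1: "(loop_step True n q z ^^ Suc k) st0 = iteration True n q z st"
      using True unfolding st_def loop_step_def by simp
    have pS1: "p \<in> Sset ((loop_step True n q z ^^ Suc k) st0)" using st1 STa(1) p_def by simp
    have yFp: "yF p = yv st p"
    proof -
      have "yF p = yv ((loop_step True n q z ^^ Suc k) st0) p"
        using A_mono[OF I Suc.prems, where i=p and q=q] pS1 unfolding yF_def by simp
      also have "\<dots> = yv st p" using st1 STa(2) p_def by simp
      finally show ?thesis .
    qed
    have yFge: "\<And>j. yv st j \<le> yF j"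
      using A_mono[OF I, where k=k and m=N and q=q] Suc.prems unfolding yF_def st_def by simp
    have pU: "p \<in> U" and pmin: "\<forall>j\<in>U. yv st p \<le> yv st j"
      using STb(1,2) unfolding p_def U_def by auto
    have pstr: "\<And>i. i < p \<Longrightarrow> i \<in> U \<Longrightarrow> yv st p < yv st i"
      using STb(3) unfolding p_def U_def by auto
    have pms: "istar_of n ms = p"
    proof -
      have "istar_of n ms = (LEAST i. i \<in> U \<and> (\<forall>j\<in>U. yF i \<le> yF j))"
        unfolding istar_of_def Let_def H U_def by simp
      also have "\<dots> = p"
      proof (rule Least_equality)
        show "p \<in> U \<and> (\<forall>j\<in>U. yF p \<le> yF j)"
          using pU pmin yFp yFge by (auto intro: order_trans)
        fix y assume y: "y \<in> U \<and> (\<forall>j\<in>U. yF y \<le> yF j)"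
        show "p \<le> y"
        proof (rule ccontr)
          assume "\<not> p \<le> y"
          hence "yv st p < yv st y" using pstr y by simp
          also have "\<dots> \<le> yF y" by (rule yFge)
          also have "\<dots> \<le> yF p" using y pU by simp
          finally show False using yFp by simp
        qed
      qed
      finally show ?thesis .
    qed
    have C: "Sset (iteration False n q z ms) = Sset (iteration True n q z st) \<and>
         xv (iteration False n q z ms) = xv (iteration True n q z st) \<and>
         Bh (iteration False n q z ms) = Bh (iteration True n q z st)"
      by (rule iteration_cong) (use H pms yFp p_def in auto)
    have yms: "yv (iteration False n q z ms) = yF"
      using H by (simp add: iteration_def Let_def)
    show "Sset (loop_step False n q z ms) = Sset (loop_step True n q z st) \<and>
    xv (loop_step False n q z ms) = xv (loop_step True n q z st) \<and>
    Bh (loop_step False n q z ms) = Bh (loop_step True n q z st) \<and>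
    yv (loop_step False n q z ms) = yF"
      using True H C yms unfolding loop_step_def by simp
  qed
qed

theorem lemma6:
  fixes n :: nat and q z :: "nat \<Rightarrow> real" and K :: real
  assumes "1 \<le> n"
    and "0 < q 1"
    and "\<And>i. 1 \<le> i \<Longrightarrow> i < n \<Longrightarrow> q i \<le> q (Suc i)"
    and "\<And>i. 1 \<le> i \<Longrightarrow> i \<le> n \<Longrightarrow> 0 < z i"
    and "0 < K"
  shows "\<forall>i\<in>{1..n}. xv (alg_mod n q z K) i = xv (alg1 n q z K) i"
proof -
  define st0 where "st0 = init1 n z K"
  have I0: "inv n z st0" unfolding inv_def st0_def init1_def by auto
  define ms0 where "ms0 = st0\<lparr>yv := (\<lambda>i. avg z i (blocker n q z K i))\<rparr>"
  have A: "alg1 n q z K = (loop_step True n q z ^^ n) st0"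
    unfolding alg1_def run_def st0_def ..
  have M: "alg_mod n q z K = (loop_step False n q z ^^ n) ms0"
    unfolding alg_mod_def run_def ms0_def st0_def ..
  have IA: "inv n z (alg1 n q z K)" unfolding A using A_inv[OF I0] .
  have y0: "yv ms0 = yv ((loop_step True n q z ^^ n) st0)"
  proof
    fix i
    have "yv ms0 i = avg z i (blk (alg1 n q z K) i)" unfolding ms0_def blocker_def by simp
    also have "\<dots> = yv (alg1 n q z K) i" using IA unfolding inv_def by simp
    finally show "yv ms0 i = yv ((loop_step True n q z ^^ n) st0) i" unfolding A .
  qed
  have "xv ((loop_step False n q z ^^ n) ms0) = xv ((loop_step True n q z ^^ n) st0)"
    using main_sim[OF I0 y0 _ _ _ order_refl] unfolding ms0_def by simp
  thus ?thesis unfolding A M by simp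
qed

end
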